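(* Let $S\subset\mathbb{C}^4$ be the surface parametrized by $(a,t)\mapsto(a,t^4,at^6,t^7)$. Then $S$ is Whitney regular along its singular locus (the first coordinate axis). However, the surface parametrized by $\tau(a,t)=(a,t^4,at^2,t^3)$ (which is the blow-up of $S$ along its singular locus) and the surface parametrized by $\sigma(a,t)=(a,t^4,\tfrac32at^2,\tfrac74t^3)$ (which is the Nash modification of $S$) are not Whitney regular along their singular locus, the first coordinate axis.
   Context: Whitney regularity along the singular locus $\mathcal{C}$ at $0$: for all sequences $x_n\in S\setminus\mathcal{C}$, $y_n\in\mathcal{C}\setminus\{0\}$ converging to $0$ with secants $\overline{x_ny_n}\to l$ and tangent planes $T_{x_n}S\to T$, one has $T_0\mathcal{C}\subset T$ and $l\subset T$. *)

theory Defs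
  imports "HOL-Analysis.Analysis"
begin

text \<open>Points of C^4 are vectors of type complex^4; complex scalar multiplication is
  the componentwise product (*s), and complex linear algebra is the library
  interpretation vec (vec.span, vec.subspace, vec.dim).\<close>

definition vec4 :: "complex \<Rightarrow> complex \<Rightarrow> complex \<Rightarrow> complex \<Rightarrow> complex ^ 4" where
  "vec4 x1 x2 x3 x4 = (\<chi> i. if i = 1 then x1 else if i = 2 then x2 else if i = 3 then x3 else x4)"

definition first_axis :: "(complex ^ 4) set" where
  "first_axis = {x. x $ 2 = 0 \<and> x $ 3 = 0 \<and> x $ 4 = 0}"

definition is_cgrass :: "nat \<Rightarrow> (complex ^ 4) set \<Rightarrow> bool" where
  "is_cgrass k V \<longleftrightarrow> vec.subspace V \<and> vec.dim V = k"

definition gap :: "(complex ^ 4) set \<Rightarrow> (complex ^ 4) set \<Rightarrow> real" where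
  "gap M N = (SUP v \<in> M \<inter> cball 0 1. infdist v N)"

text \<open>Convergence of subspaces in the Grassmannian (gap / Hausdorff metric on unit balls).\<close>
definition subspace_tendsto :: "(nat \<Rightarrow> (complex ^ 4) set) \<Rightarrow> (complex ^ 4) set \<Rightarrow> bool" where
  "subspace_tendsto V W \<longleftrightarrow>
     (\<lambda>n. gap (V n) W) \<longlonglongrightarrow> 0 \<and> (\<lambda>n. gap W (V n)) \<longlonglongrightarrow> 0"

definition d_a :: "(complex \<Rightarrow> complex \<Rightarrow> complex ^ 4) \<Rightarrow> complex \<Rightarrow> complex \<Rightarrow> complex ^ 4" where
  "d_a phi a t = (\<chi> i. deriv (\<lambda>s. phi s t $ i) a)"

definition d_t :: "(complex \<Rightarrow> complex \<Rightarrow> complex ^ 4) \<Rightarrow> complex \<Rightarrow> complex \<Rightarrow> complex ^ 4" where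
  "d_t phi a t = (\<chi> i. deriv (\<lambda>s. phi a s $ i) t)"

definition tangent_plane :: "(complex \<Rightarrow> complex \<Rightarrow> complex ^ 4) \<Rightarrow> complex \<Rightarrow> complex \<Rightarrow> (complex ^ 4) set" where
  "tangent_plane phi a t = vec.span {d_a phi a t, d_t phi a t}"

text \<open>Whitney regularity at 0 along the first coordinate axis C of the surface
  S = phi(C^2), where S minus C is exactly phi({t \<noteq> 0}) (phi injective there).
  Sequences x_n in S - C are written x_n = phi(a_n, t_n), t_n \<noteq> 0.
  Note T_0 C = C since C is a linear subspace.\<close>
definition whitney_regular_at_0 :: "(complex \<Rightarrow> complex \<Rightarrow> complex ^ 4) \<Rightarrow> bool" where
  "whitney_regular_at_0 phi \<longleftrightarrow>
    (\<forall>(a::nat \<Rightarrow> complex) (t::nat \<Rightarrow> complex) (y::nat \<Rightarrow> complex ^ 4) l T.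
       (\<forall>n. t n \<noteq> 0) \<longrightarrow> (\<lambda>n. phi (a n) (t n)) \<longlonglongrightarrow> 0 \<longrightarrow>
       (\<forall>n. y n \<in> first_axis - {0}) \<longrightarrow> y \<longlonglongrightarrow> 0 \<longrightarrow>
       is_cgrass 1 l \<longrightarrow> subspace_tendsto (\<lambda>n. vec.span {phi (a n) (t n) - y n}) l \<longrightarrow>
       is_cgrass 2 T \<longrightarrow> subspace_tendsto (\<lambda>n. tangent_plane phi (a n) (t n)) T \<longrightarrow>
       first_axis \<subseteq> T \<and> l \<subseteq> T)"

end

theory Submission
  imports Defs
begin

lemma vec4_nth[simp]: "vec4 a b c d $ 1 = a" "vec4 a b c d $ 2 = b" "vec4 a b c d $ 3 = c" "vec4 a b c d $ 4 = d"
  by (simp_all add: vec4_def)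
lemma vec4_eq: "x = vec4 (x$1) (x$2) (x$3) (x$4)"
  by (simp add: vec_eq_iff forall_4)
lemma vec4_eq_iff: "vec4 a b c d = vec4 a' b' c' d' \<longleftrightarrow> a = a' \<and> b = b' \<and> c = c' \<and> d = d'"
  by (simp add: vec_eq_iff forall_4)
lemma vec4_ops[simp]: "vec4 a b c d + vec4 a' b' c' d' = vec4 (a+a') (b+b') (c+c') (d+d')"
  "vec4 a b c d - vec4 a' b' c' d' = vec4 (a-a') (b-b') (c-c') (d-d')"
  "k *s vec4 a b c d = vec4 (k*a) (k*b) (k*c) (k*d)"
  by (simp_all add: vec_eq_iff forall_4)
lemma vec4_zero: "(0::complex^4) = vec4 0 0 0 0"
  by (simp_all add: vec_eq_iff forall_4)
lemma d_a_vec4: "d_a (\<lambda>a t. vec4 (f1 a t) (f2 a t) (f3 a t) (f4 a t)) a t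
   = vec4 (deriv (\<lambda>s. f1 s t) a) (deriv (\<lambda>s. f2 s t) a) (deriv (\<lambda>s. f3 s t) a) (deriv (\<lambda>s. f4 s t) a)"
  by (simp add: d_a_def vec_eq_iff forall_4)
lemma d_t_vec4: "d_t (\<lambda>a t. vec4 (f1 a t) (f2 a t) (f3 a t) (f4 a t)) a t
   = vec4 (deriv (\<lambda>s. f1 a s) t) (deriv (\<lambda>s. f2 a s) t) (deriv (\<lambda>s. f3 a s) t) (deriv (\<lambda>s. f4 a s) t)"
  by (simp add: d_t_def vec_eq_iff forall_4)
lemma "deriv (\<lambda>s::complex. a * s^6) t = 6 * a * t^5"
  by (rule DERIV_imp_deriv) (auto intro!: derivative_eq_intros)
lemma norm_vec4: "norm (vec4 a b c d) \<le> norm a + norm b + norm c + norm d"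
proof -
  have "norm (vec4 a b c d) \<le> (\<Sum>i\<in>UNIV. norm (vec4 a b c d $ i))"
    unfolding norm_vec_def by (rule L2_set_le_sum) auto
  thus ?thesis by (simp only: sum_4 vec4_nth)
qed
lemma comp_le: "norm (x $ i) \<le> norm (x::complex^4)"
  by (rule Finite_Cartesian_Product.norm_nth_le)

lemma ofreal_smult: "complex_of_real r *s (x::complex^4) = r *\<^sub>R x"
proof (rule vec_eq_iff[THEN iffD2], rule allI)
  fix i show "(complex_of_real r *s x) $ i = (r *\<^sub>R x) $ i"
    unfolding vector_smult_component vector_scaleR_component by (simp add: scaleR_conv_of_real)
qed
lemma vsub_scaleR: "vec.subspace T \<Longrightarrow> x \<in> T \<Longrightarrow> r *\<^sub>R (x::complex^4) \<in> T"
  by (metis ofreal_smult vec.subspace_scale)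
lemma vsub_closed: "vec.subspace (T::(complex^4) set) \<Longrightarrow> closed T"
  apply (rule closed_subspace)
  unfolding subspace_def
  by (auto simp: vec.subspace_0 vec.subspace_add vsub_scaleR)
lemma gap_ge: "vec.subspace N \<Longrightarrow> v \<in> M \<Longrightarrow> norm v \<le> 1 \<Longrightarrow> infdist v N \<le> gap M N"
  unfolding gap_def
proof (rule cSUP_upper)
  assume N: "vec.subspace N" and "v \<in> M" "norm v \<le> 1"
  thus "v \<in> M \<inter> cball 0 1" by (simp add: dist_norm)
  show "bdd_above ((\<lambda>v. infdist v N) ` (M \<inter> cball 0 1))"
  proof (rule bdd_aboveI[where M=1], clarify)
    fix x assume "x \<in> M" "x \<in> cball (0::complex^4) 1"
    hence "dist x 0 \<le> 1" by (simp add: dist_commute)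
    moreover have "infdist x N \<le> dist x 0" by (rule infdist_le[OF vec.subspace_0[OF N]])
    ultimately show "infdist x N \<le> 1" by linarith
  qed
qed
lemma gap_le: "0 \<in> M \<Longrightarrow> (\<And>v. v \<in> M \<Longrightarrow> norm v \<le> 1 \<Longrightarrow> infdist v N \<le> e) \<Longrightarrow> gap M N \<le> e"
  unfolding gap_def
  by (rule cSUP_least) auto
lemma limA:
  assumes T: "vec.subspace (T::(complex^4) set)" and V: "\<And>n. vec.subspace (V n)"
    and g: "(\<lambda>n. gap (V n) T) \<longlonglongrightarrow> 0" and v: "\<And>n. v n \<in> V n" and lim: "v \<longlonglongrightarrow> w"
  shows "w \<in> T"
proof -
  define r where "r = 1 / (norm w + 1)"
  have p: "0 < norm w + 1" using norm_ge_zero[of w] by linarith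
  have r1: "r > 0" using p by (simp add: r_def)
  have "r * norm w = norm w / (norm w + 1)" by (simp add: r_def)
  also have "\<dots> < 1" using p by (simp add: divide_less_eq)
  finally have r2: "r * norm w < 1" .
  have z: "(\<lambda>n. r *\<^sub>R v n) \<longlonglongrightarrow> r *\<^sub>R w" by (rule tendsto_scaleR[OF tendsto_const lim])
  have "(\<lambda>n. norm (r *\<^sub>R v n)) \<longlonglongrightarrow> norm (r *\<^sub>R w)" by (rule tendsto_norm[OF z])
  moreover have "norm (r *\<^sub>R w) < 1" using r1 r2 by simp
  ultimately have ev: "eventually (\<lambda>n. norm (r *\<^sub>R v n) < 1) sequentially"
    by (rule order_tendstoD)
  have ev2: "eventually (\<lambda>n. infdist (r *\<^sub>R v n) T \<le> gap (V n) T) sequentially"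
    using ev by eventually_elim (rule gap_ge[OF T vsub_scaleR[OF V v]], simp)
  have lim2: "(\<lambda>n. infdist (r *\<^sub>R v n) T) \<longlonglongrightarrow> infdist (r *\<^sub>R w) T"
    by (rule tendsto_infdist[OF z])
  have "infdist (r *\<^sub>R w) T \<le> 0" by (rule tendsto_le[OF trivial_limit_sequentially g lim2 ev2])
  hence "infdist (r *\<^sub>R w) T = 0" using infdist_nonneg antisym by blast
  hence "r *\<^sub>R w \<in> T" using in_closed_iff_infdist_zero[OF vsub_closed[OF T]] vec.subspace_0[OF T] by blast
  hence "(1/r) *\<^sub>R (r *\<^sub>R w) \<in> T" by (rule vsub_scaleR[OF T])
  thus ?thesis using r1 by simp
qed
lemma limB:
  assumes V: "\<And>n. vec.subspace (V n :: (complex^4) set)"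
    and g: "(\<lambda>n. gap l (V n)) \<longlonglongrightarrow> 0" and w: "w \<in> l" "norm w \<le> 1"
  shows "\<exists>u. (\<forall>n. u n \<in> V n) \<and> u \<longlonglongrightarrow> w"
proof -
  have d: "(\<lambda>n. infdist w (V n)) \<longlonglongrightarrow> 0"
  proof (rule real_tendsto_sandwich[where f="\<lambda>_. 0" and h="\<lambda>n. gap l (V n)"])
    show "\<forall>\<^sub>F n in sequentially. 0 \<le> infdist w (V n)" by (rule always_eventually) (simp add: infdist_nonneg)
    show "\<forall>\<^sub>F n in sequentially. infdist w (V n) \<le> gap l (V n)"
      by (rule always_eventually) (intro allI gap_ge[OF V w])
    show "(\<lambda>n. 0::real) \<longlonglongrightarrow> 0" by (rule tendsto_const)
    show "(\<lambda>n. gap l (V n)) \<longlonglongrightarrow> 0" by (rule g)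
  qed
  have "\<forall>n. \<exists>u. u \<in> V n \<and> dist w u < infdist w (V n) + inverse (real (Suc n))"
  proof
    fix n
    have ne: "V n \<noteq> {}" using vec.subspace_0[OF V] by blast
    have "Inf (dist w ` V n) < infdist w (V n) + inverse (real (Suc n))"
      using infdist_notempty[OF ne] by simp
    then obtain x where "x \<in> dist w ` V n" "x < infdist w (V n) + inverse (real (Suc n))"
      using cInf_lessD[of "dist w ` V n"] ne by blast
    then show "\<exists>u. u \<in> V n \<and> dist w u < infdist w (V n) + inverse (real (Suc n))"
      by blast
  qed
  then obtain u where u: "\<And>n. u n \<in> V n" "\<And>n. dist w (u n) < infdist w (V n) + inverse (real (Suc n))"
    by metis
  have h: "(\<lambda>n. infdist w (V n) + inverse (real (Suc n))) \<longlonglongrightarrow> 0 + 0"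
    by (rule tendsto_add[OF d LIMSEQ_inverse_real_of_nat])
  have "(\<lambda>n. dist (u n) w) \<longlonglongrightarrow> 0"
  proof (rule real_tendsto_sandwich[where f="\<lambda>_. 0" and h="\<lambda>n. infdist w (V n) + inverse (real (Suc n))"])
    show "\<forall>\<^sub>F n in sequentially. 0 \<le> dist (u n) w" by (rule always_eventually) simp
    show "\<forall>\<^sub>F n in sequentially. dist (u n) w \<le> infdist w (V n) + inverse (real (Suc n))"
      by (rule always_eventually) (metis u(2) dist_commute less_imp_le)
    show "(\<lambda>n. 0::real) \<longlonglongrightarrow> 0" by (rule tendsto_const)
  qed (use h in simp)
  hence "u \<longlonglongrightarrow> w" using tendsto_dist_iff by blast
  thus ?thesis using u(1) by blast
qed

lemma tendsto_vec4:
  assumes "f1 \<longlonglongrightarrow> x1" "f2 \<longlonglongrightarrow> x2" "f3 \<longlonglongrightarrow> x3" "f4 \<longlonglongrightarrow> x4"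
  shows "(\<lambda>n. vec4 (f1 n) (f2 n) (f3 n) (f4 n)) \<longlonglongrightarrow> vec4 x1 x2 x3 x4"
  unfolding vec4_def by (rule tendsto_vec_lambda) (auto intro: assms)

abbreviation "phi1 \<equiv> (\<lambda>a t. vec4 a (t ^ 4) (a * t ^ 6) (t ^ 7))"
lemma d_a_phi1: "d_a phi1 a t = vec4 1 0 (t^6) 0"
  unfolding d_a_def
  by (simp add: vec_eq_iff forall_4)
lemma d_t_phi1: "d_t phi1 a t = vec4 0 (4*t^3) (6*a*t^5) (7*t^6)"
  unfolding d_t_def
  apply (simp add: vec_eq_iff forall_4)
  apply (intro conjI DERIV_imp_deriv)
  apply (auto intro!: derivative_eq_intros)
  done
lemma t_to_0: assumes "(\<lambda>n. (t n)^4) \<longlonglongrightarrow> (0::complex)" shows "t \<longlonglongrightarrow> 0"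
proof -
  have "(\<lambda>n. norm ((t n)^4)) \<longlonglongrightarrow> 0" using tendsto_norm_zero[OF assms] .
  hence "(\<lambda>n. root 4 (norm ((t n)^4))) \<longlonglongrightarrow> root 4 0" by (rule tendsto_real_root)
  moreover have "\<And>n. root 4 (norm ((t n)^4)) = norm (t n)" by (simp add: norm_power real_root_power_cancel)
  ultimately have "(\<lambda>n. norm (t n)) \<longlonglongrightarrow> 0" by simp
  thus ?thesis by (simp add: tendsto_norm_zero_iff)
qed

lemma r_facts: "0 < 1 / (norm w + 1)" "(1 / (norm w + 1)) * norm w < 1"
proof -
  have p: "0 < norm w + 1" using norm_ge_zero[of w] by linarith
  show "0 < 1 / (norm w + 1)" using p by simp
  have "(1 / (norm w + 1)) * norm w = norm w / (norm w + 1)" by simp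
  also have "\<dots> < 1" using p by (simp add: divide_less_eq)
  finally show "(1 / (norm w + 1)) * norm w < 1" .
qed

lemma part1: "whitney_regular_at_0 phi1"
  unfolding whitney_regular_at_0_def
proof (intro allI impI)
  fix a t :: "nat \<Rightarrow> complex" and y :: "nat \<Rightarrow> complex^4" and l T
  assume tn: "\<forall>n. t n \<noteq> 0" and conv: "(\<lambda>n. phi1 (a n) (t n)) \<longlonglongrightarrow> 0"
    and yn: "\<forall>n. y n \<in> first_axis - {0}" and "y \<longlonglongrightarrow> 0"
    and l: "is_cgrass 1 l" and lt: "subspace_tendsto (\<lambda>n. vec.span {phi1 (a n) (t n) - y n}) l"
    and T: "is_cgrass 2 T" and Tt: "subspace_tendsto (\<lambda>n. tangent_plane phi1 (a n) (t n)) T"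
  have Ts: "vec.subspace T" using T by (simp add: is_cgrass_def)
  have ls: "vec.subspace l" using l by (simp add: is_cgrass_def)
  have a0: "a \<longlonglongrightarrow> 0" using tendsto_vec_nth[OF conv, of 1] by simp
  have t40: "(\<lambda>n. (t n)^4) \<longlonglongrightarrow> 0" using tendsto_vec_nth[OF conv, of 2] by simp
  have t0: "t \<longlonglongrightarrow> 0" by (rule t_to_0[OF t40])
  have tp: "(\<lambda>n. t n ^ k) \<longlonglongrightarrow> 0" if "k > 0" for k using tendsto_power[OF t0, of k] that by (simp add: zero_power)
  have gT: "(\<lambda>n. gap (tangent_plane phi1 (a n) (t n)) T) \<longlonglongrightarrow> 0" using Tt by (simp add: subspace_tendsto_def)
  have Vs: "\<And>n. vec.subspace (tangent_plane phi1 (a n) (t n))" by (simp add: tangent_plane_def)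
  have e1: "vec4 1 0 0 0 \<in> T"
  proof (rule limA[OF Ts Vs gT])
    show "\<And>n. d_a phi1 (a n) (t n) \<in> tangent_plane phi1 (a n) (t n)" by (simp add: tangent_plane_def vec.span_base)
    show "(\<lambda>n. d_a phi1 (a n) (t n)) \<longlonglongrightarrow> vec4 1 0 0 0" unfolding d_a_phi1
      by (rule tendsto_vec4) (auto intro: tp)
  qed
  have e2: "vec4 0 1 0 0 \<in> T"
  proof (rule limA[OF Ts Vs gT])
    show "\<And>n. inverse (4 * t n ^ 3) *s d_t phi1 (a n) (t n) \<in> tangent_plane phi1 (a n) (t n)"
      by (simp add: tangent_plane_def vec.span_base vec.span_scale)
    have eq: "inverse (4 * t n ^ 3) *s d_t phi1 (a n) (t n) = vec4 0 1 (3/2 * a n * t n ^ 2) (7/4 * t n ^ 3)" for n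
      using tn unfolding d_t_phi1 by (simp add: field_simps power_add[symmetric] eval_nat_numeral)
    have "(\<lambda>n. vec4 0 1 (3/2 * a n * t n ^ 2) (7/4 * t n ^ 3)) \<longlonglongrightarrow> vec4 0 1 (3/2 * 0 * 0) (7/4 * 0)"
      by (intro tendsto_vec4 tendsto_intros a0 tp) auto
    thus "(\<lambda>n. inverse (4 * t n ^ 3) *s d_t phi1 (a n) (t n)) \<longlonglongrightarrow> vec4 0 1 0 0"
      unfolding eq by simp
  qed
  have inT: "w \<in> T" if "w $ 3 = 0" "w $ 4 = 0" for w
  proof -
    have "w = w $ 1 *s vec4 1 0 0 0 + w $ 2 *s vec4 0 1 0 0" using that by (simp add: vec_eq_iff forall_4)
    thus ?thesis using e1 e2 Ts vec.subspace_add vec.subspace_scale by metis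
  qed
  have gl: "(\<lambda>n. gap l (vec.span {phi1 (a n) (t n) - y n})) \<longlonglongrightarrow> 0" using lt by (simp add: subspace_tendsto_def)
  have y0: "y n $ 2 = 0" "y n $ 3 = 0" "y n $ 4 = 0" for n using yn by (auto simp: first_axis_def)
  have key: "w $ 3 = 0 \<and> w $ 4 = 0" if ww: "w \<in> l" "norm w \<le> 1" for w
  proof -
    obtain u where u: "\<And>n. u n \<in> vec.span {phi1 (a n) (t n) - y n}" "u \<longlonglongrightarrow> w"
      using limB[OF _ gl ww] by auto
    have "\<forall>n. \<exists>c. u n = c *s (phi1 (a n) (t n) - y n)" using u(1) by (auto simp: vec.span_singleton)
    then obtain c where c: "\<And>n. u n = c n *s (phi1 (a n) (t n) - y n)" by metis
    have u3: "u n $ 3 = u n $ 2 * (a n * t n ^ 2)" for n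
      by (simp add: c y0 power_add[symmetric] eval_nat_numeral algebra_simps)
    have u4: "u n $ 4 = u n $ 2 * (t n ^ 3)" for n
      by (simp add: c y0 power_add[symmetric] eval_nat_numeral algebra_simps)
    have l2: "(\<lambda>n. u n $ 2) \<longlonglongrightarrow> w $ 2" by (rule tendsto_vec_nth[OF u(2)])
    have "(\<lambda>n. u n $ 2 * (a n * t n ^ 2)) \<longlonglongrightarrow> w $ 2 * (0 * 0)"
      by (intro tendsto_intros l2 a0 tp) auto
    hence A: "(\<lambda>n. u n $ 3) \<longlonglongrightarrow> 0" unfolding u3 by simp
    have "(\<lambda>n. u n $ 2 * (t n ^ 3)) \<longlonglongrightarrow> w $ 2 * 0"
      by (intro tendsto_intros l2 tp) auto
    hence B: "(\<lambda>n. u n $ 4) \<longlonglongrightarrow> 0" unfolding u4 by simp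
    have "w $ 3 = 0" using LIMSEQ_unique[OF tendsto_vec_nth[OF u(2)] A] .
    moreover have "w $ 4 = 0" using LIMSEQ_unique[OF tendsto_vec_nth[OF u(2)] B] .
    ultimately show ?thesis ..
  qed
  have l_in: "w $ 3 = 0 \<and> w $ 4 = 0" if "w \<in> l" for w
  proof -
    define r where "r = 1 / (norm w + 1)"
    have r: "0 < r" "r * norm w < 1" unfolding r_def by (rule r_facts)+
    have "norm (r *\<^sub>R w) \<le> 1" using r by simp
    hence "(r *\<^sub>R w) $ 3 = 0 \<and> (r *\<^sub>R w) $ 4 = 0"
      using key[OF vsub_scaleR[OF ls that, of r]] by blast
    thus ?thesis using r by simp
  qed
  show "first_axis \<subseteq> T \<and> l \<subseteq> T"
    using inT l_in by (auto simp: first_axis_def)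
qed


lemma span2: "v \<in> vec.span {x, y} \<longleftrightarrow> (\<exists>\<alpha> \<beta>. v = \<alpha> *s x + \<beta> *s (y::complex^4))"
proof
  assume "v \<in> vec.span {x, y}"
  then obtain k j where "v - k *s x = j *s y" by (auto simp: vec.span_insert vec.span_singleton)
  hence "v = k *s x + j *s y" by (simp add: algebra_simps)
  thus "\<exists>\<alpha> \<beta>. v = \<alpha> *s x + \<beta> *s y" by blast
next
  assume "\<exists>\<alpha> \<beta>. v = \<alpha> *s x + \<beta> *s y"
  then obtain \<alpha> \<beta> where v: "v = \<alpha> *s x + \<beta> *s y" by blast
  have "x \<in> vec.span {x, y}" "y \<in> vec.span {x, y}" by (simp_all add: vec.span_base)
  thus "v \<in> vec.span {x, y}" unfolding v by (intro vec.span_add vec.span_scale)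
qed

lemma span1: "v \<in> vec.span {x} \<longleftrightarrow> (\<exists>c. v = c *s (x::complex^4))"
  by (auto simp: vec.span_singleton)

lemma gap_tendsto0:
  assumes N: "\<And>n. vec.subspace (N n :: (complex^4) set)" and M: "\<And>n. vec.subspace (M n)"
   and b: "\<And>n v. v \<in> M n \<Longrightarrow> norm v \<le> 1 \<Longrightarrow> \<exists>P\<in>N n. dist v P \<le> B n" and B: "B \<longlonglongrightarrow> 0"
  shows "(\<lambda>n. gap (M n) (N n)) \<longlonglongrightarrow> 0"
proof (rule real_tendsto_sandwich[where f="\<lambda>_. 0" and h=B])
  show "\<forall>\<^sub>F n in sequentially. 0 \<le> gap (M n) (N n)"
  proof (rule always_eventually, rule allI)
    fix n
    have "infdist 0 (N n) \<le> gap (M n) (N n)" by (rule gap_ge[OF N vec.subspace_0[OF M]]) simp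
    thus "0 \<le> gap (M n) (N n)" using infdist_nonneg[of 0 "N n"] by linarith
  qed
  show "\<forall>\<^sub>F n in sequentially. gap (M n) (N n) \<le> B n"
  proof (rule always_eventually, rule allI)
    fix n
    show "gap (M n) (N n) \<le> B n"
    proof (rule gap_le[OF vec.subspace_0[OF M]])
      fix v assume "v \<in> M n" "norm v \<le> 1"
      then obtain P where "P \<in> N n" "dist v P \<le> B n" using b by blast
      thus "infdist v (N n) \<le> B n" by (rule infdist_le2)
    qed
  qed
  show "(\<lambda>n. 0::real) \<longlonglongrightarrow> 0" by (rule tendsto_const)
qed (rule B)

lemma norm_bound: "norm x2 \<le> 1 \<Longrightarrow> norm x3 \<le> 1 \<Longrightarrow> norm (vec4 0 (c2 * x2) (c3 * x3) 0) \<le> norm c2 + norm c3"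
proof -
  assume a: "norm x2 \<le> 1" "norm x3 \<le> 1"
  have "norm (c2 * x2) \<le> norm c2" using a(1) by (simp add: norm_mult mult_left_le)
  moreover have "norm (c3 * x3) \<le> norm c3" using a(2) by (simp add: norm_mult mult_left_le)
  ultimately show ?thesis using norm_vec4[of 0 "c2 * x2" "c3 * x3" 0] by simp
qed

definition tn :: "nat \<Rightarrow> complex" where "tn n = complex_of_real (inverse (real (Suc n)))"
lemma tn_nz: "tn n \<noteq> 0" unfolding tn_def by (subst of_real_eq_0_iff) simp
lemma tn_lim: "tn \<longlonglongrightarrow> 0"
  unfolding tn_def using tendsto_of_real[OF LIMSEQ_inverse_real_of_nat, where 'a=complex] by simp

lemma d_a_pq: "d_a (\<lambda>a t. vec4 a (t ^ 4) (p * a * t ^ 2) (q * t ^ 3)) a t = vec4 1 0 (p * t^2) 0"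
  unfolding d_a_def by (simp add: vec_eq_iff forall_4)
lemma d_t_pq: "d_t (\<lambda>a t. vec4 a (t ^ 4) (p * a * t ^ 2) (q * t ^ 3)) a t = vec4 0 (4*t^3) (2*p*a*t) (3*q*t^2)"
  unfolding d_t_def
  apply (simp add: vec_eq_iff forall_4)
  apply (intro conjI DERIV_imp_deriv)
  apply (auto intro!: derivative_eq_intros)
  done


lemma dist_helper:
  assumes "P \<in> N" "norm v \<le> 1" "v - P = vec4 0 (c2 * v$4) (c3 * v$1) 0"
  shows "\<exists>P\<in>N. dist v P \<le> norm c2 + norm c3"
proof -
  have "norm (v $ 4) \<le> 1" "norm (v $ 1) \<le> 1"
    using Finite_Cartesian_Product.norm_nth_le[of v] assms(2) by (meson order_trans)+
  hence "norm (v - P) \<le> norm c2 + norm c3" unfolding assms(3) by (rule norm_bound)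
  thus ?thesis using assms(1) by (auto simp: dist_norm)
qed

lemma part_neg:
  fixes p q :: complex assumes q: "q \<noteq> 0" and p: "p \<noteq> 0"
  shows "\<not> whitney_regular_at_0 (\<lambda>a t. vec4 a (t ^ 4) (p * a * t ^ 2) (q * t ^ 3))"
proof
  define phi where "phi = (\<lambda>a t. vec4 a (t ^ 4) (p * a * t ^ 2) (q * t ^ 3))"
  assume "whitney_regular_at_0 (\<lambda>a t. vec4 a (t ^ 4) (p * a * t ^ 2) (q * t ^ 3))"
  hence W: "whitney_regular_at_0 phi" by (simp add: phi_def)
  define y where "y n = vec4 (tn n) 0 0 0" for n
  define f where "f = vec4 0 0 (2*p) (3*q)"
  define e1 where "e1 = vec4 1 0 0 0"
  define g where "g = vec4 0 0 p q"
  define l where "l = vec.span {g}"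
  define T where "T = vec.span {e1, f}"
  have s_eq: "phi (tn n) (tn n) - y n = vec4 0 (tn n ^ 4) (p * tn n ^ 3) (q * tn n ^ 3)" for n
    by (simp add: phi_def y_def eval_nat_numeral algebra_simps)
  have tp_eq: "tangent_plane phi (tn n) (tn n) = vec.span {vec4 1 0 (p * tn n ^ 2) 0, vec4 0 (4 * tn n ^ 3) (2 * p * tn n * tn n) (3 * q * tn n ^ 2)}" for n
    unfolding tangent_plane_def phi_def d_a_pq d_t_pq ..
  have h2: "(\<lambda>n. phi (tn n) (tn n)) \<longlonglongrightarrow> 0"
  proof -
    have "(\<lambda>n. vec4 (tn n) (tn n ^ 4) (p * tn n * tn n ^ 2) (q * tn n ^ 3)) \<longlonglongrightarrow> vec4 0 (0^4) (p*0*0^2) (q*0^3)"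
      by (intro tendsto_vec4 tendsto_intros tn_lim)
    thus ?thesis by (simp add: phi_def vec4_zero)
  qed
  have h3: "\<forall>n. y n \<in> first_axis - {0}"
    by (simp add: y_def first_axis_def vec4_zero vec4_eq_iff tn_nz)
  have h4: "y \<longlonglongrightarrow> 0"
  proof -
    have "y \<longlonglongrightarrow> vec4 0 0 0 0" unfolding y_def by (intro tendsto_vec4 tendsto_intros tn_lim)
    thus ?thesis by (simp add: vec4_zero)
  qed
  have gnz: "g \<noteq> 0" using q by (simp add: g_def vec4_zero vec4_eq_iff)
  have h5: "is_cgrass 1 l"
    unfolding is_cgrass_def l_def
    using vec.dim_span_eq_card_independent[of "{g}"] gnz by simp
  have e1f: "e1 \<notin> vec.span {f}"
    by (auto simp: span1 e1_def f_def vec4_eq_iff)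
  have h7: "is_cgrass 2 T"
  proof -
    have ne: "e1 \<noteq> f" by (simp add: e1_def f_def vec4_eq_iff)
    have fnz: "f \<noteq> 0" using q by (simp add: f_def vec4_zero vec4_eq_iff)
    have "vec.independent {e1, f}" using vec.independent_insert[of e1 "{f}"] ne fnz e1f by simp
    thus ?thesis unfolding is_cgrass_def T_def
      using vec.dim_span_eq_card_independent[of "{e1, f}"] ne by simp
  qed
  have Blim: "(\<lambda>n. norm (c * tn n) + norm (d * tn n ^ 2)) \<longlonglongrightarrow> 0" for c d :: complex
  proof -
    have "(\<lambda>n. norm (c * tn n) + norm (d * tn n ^ 2)) \<longlonglongrightarrow> norm (c * 0) + norm (d * 0 ^ 2)"
      by (intro tendsto_intros tn_lim)
    thus ?thesis by simp
  qed
  have h6: "subspace_tendsto (\<lambda>n. vec.span {phi (tn n) (tn n) - y n}) l"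
    unfolding subspace_tendsto_def s_eq
  proof
    show "(\<lambda>n. gap (vec.span {vec4 0 (tn n ^ 4) (p * tn n ^ 3) (q * tn n ^ 3)}) l) \<longlonglongrightarrow> 0"
    proof (rule gap_tendsto0[where B="\<lambda>n. norm (inverse q * tn n) + norm (0 * tn n ^ 2)"])
      fix n v assume v: "v \<in> vec.span {vec4 0 (tn n ^ 4) (p * tn n ^ 3) (q * tn n ^ 3)}" "norm v \<le> 1"
      then obtain c where c: "v = c *s vec4 0 (tn n ^ 4) (p * tn n ^ 3) (q * tn n ^ 3)" by (auto simp: span1)
      show "\<exists>P\<in>l. dist v P \<le> norm (inverse q * tn n) + norm (0 * tn n ^ 2)"
      proof (rule dist_helper[OF _ v(2)])
        show "(c * tn n ^ 3) *s g \<in> l" by (simp add: l_def vec.span_base vec.span_scale)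
        show "v - (c * tn n ^ 3) *s g = vec4 0 ((inverse q * tn n) * v $ 4) ((0 * tn n ^ 2) * v $ 1) 0"
          using q by (simp add: c g_def vec4_eq_iff field_simps eval_nat_numeral)
      qed
    qed (use Blim[of "inverse q" 0] in \<open>auto simp: l_def\<close>)
    show "(\<lambda>n. gap l (vec.span {vec4 0 (tn n ^ 4) (p * tn n ^ 3) (q * tn n ^ 3)})) \<longlonglongrightarrow> 0"
    proof (rule gap_tendsto0[where B="\<lambda>n. norm (- inverse q * tn n) + norm (0 * tn n ^ 2)"])
      fix n v assume v: "v \<in> l" "norm v \<le> 1"
      then obtain c where c: "v = c *s g" by (auto simp: span1 l_def)
      show "\<exists>P\<in>vec.span {vec4 0 (tn n ^ 4) (p * tn n ^ 3) (q * tn n ^ 3)}. dist v P \<le> norm (- inverse q * tn n) + norm (0 * tn n ^ 2)"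
      proof (rule dist_helper[OF _ v(2)])
        show "(c / tn n ^ 3) *s vec4 0 (tn n ^ 4) (p * tn n ^ 3) (q * tn n ^ 3) \<in> vec.span {vec4 0 (tn n ^ 4) (p * tn n ^ 3) (q * tn n ^ 3)}"
          by (rule vec.span_scale, rule vec.span_base, simp)
        show "v - (c / tn n ^ 3) *s vec4 0 (tn n ^ 4) (p * tn n ^ 3) (q * tn n ^ 3) = vec4 0 ((- inverse q * tn n) * v $ 4) ((0 * tn n ^ 2) * v $ 1) 0"
          using q tn_nz[of n] by (simp add: c g_def vec4_eq_iff field_simps eval_nat_numeral)
      qed
    qed (use Blim[of "- inverse q" 0] in \<open>auto simp: l_def\<close>)
  qed
  have h8: "subspace_tendsto (\<lambda>n. tangent_plane phi (tn n) (tn n)) T"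
    unfolding subspace_tendsto_def tp_eq
  proof
    show "(\<lambda>n. gap (vec.span {vec4 1 0 (p * tn n ^ 2) 0, vec4 0 (4 * tn n ^ 3) (2 * p * tn n * tn n) (3 * q * tn n ^ 2)}) T) \<longlonglongrightarrow> 0"
    proof (rule gap_tendsto0[where B="\<lambda>n. norm (4 / (3 * q) * tn n) + norm (p * tn n ^ 2)"])
      fix n v assume v: "v \<in> vec.span {vec4 1 0 (p * tn n ^ 2) 0, vec4 0 (4 * tn n ^ 3) (2 * p * tn n * tn n) (3 * q * tn n ^ 2)}" "norm v \<le> 1"
      then obtain \<alpha> \<beta> where c: "v = \<alpha> *s vec4 1 0 (p * tn n ^ 2) 0 + \<beta> *s vec4 0 (4 * tn n ^ 3) (2 * p * tn n * tn n) (3 * q * tn n ^ 2)"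
        by (auto simp: span2)
      show "\<exists>P\<in>T. dist v P \<le> norm (4 / (3 * q) * tn n) + norm (p * tn n ^ 2)"
      proof (rule dist_helper[OF _ v(2)])
        show "\<alpha> *s e1 + (\<beta> * tn n ^ 2) *s f \<in> T" by (auto simp: T_def span2)
        show "v - (\<alpha> *s e1 + (\<beta> * tn n ^ 2) *s f) = vec4 0 ((4 / (3 * q) * tn n) * v $ 4) ((p * tn n ^ 2) * v $ 1) 0"
          using q by (simp add: c e1_def f_def vec4_eq_iff field_simps eval_nat_numeral)
      qed
    qed (use Blim[of "4 / (3 * q)" p] in \<open>auto simp: T_def\<close>)
    show "(\<lambda>n. gap T (vec.span {vec4 1 0 (p * tn n ^ 2) 0, vec4 0 (4 * tn n ^ 3) (2 * p * tn n * tn n) (3 * q * tn n ^ 2)})) \<longlonglongrightarrow> 0"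
    proof (rule gap_tendsto0[where B="\<lambda>n. norm (- 4 / (3 * q) * tn n) + norm (- p * tn n ^ 2)"])
      fix n v assume v: "v \<in> T" "norm v \<le> 1"
      then obtain \<alpha> \<beta> where c: "v = \<alpha> *s e1 + \<beta> *s f" by (auto simp: span2 T_def)
      show "\<exists>P\<in>vec.span {vec4 1 0 (p * tn n ^ 2) 0, vec4 0 (4 * tn n ^ 3) (2 * p * tn n * tn n) (3 * q * tn n ^ 2)}. dist v P \<le> norm (- 4 / (3 * q) * tn n) + norm (- p * tn n ^ 2)"
      proof (rule dist_helper[OF _ v(2)])
        show "\<alpha> *s vec4 1 0 (p * tn n ^ 2) 0 + (\<beta> / tn n ^ 2) *s vec4 0 (4 * tn n ^ 3) (2 * p * tn n * tn n) (3 * q * tn n ^ 2) \<in> vec.span {vec4 1 0 (p * tn n ^ 2) 0, vec4 0 (4 * tn n ^ 3) (2 * p * tn n * tn n) (3 * q * tn n ^ 2)}"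
          unfolding span2 by blast
        show "v - (\<alpha> *s vec4 1 0 (p * tn n ^ 2) 0 + (\<beta> / tn n ^ 2) *s vec4 0 (4 * tn n ^ 3) (2 * p * tn n * tn n) (3 * q * tn n ^ 2)) = vec4 0 ((- 4 / (3 * q) * tn n) * v $ 4) ((- p * tn n ^ 2) * v $ 1) 0"
          using q tn_nz[of n] by (simp add: c e1_def f_def vec4_eq_iff field_simps eval_nat_numeral)
      qed
    qed (use Blim[of "- 4 / (3 * q)" "- p"] in \<open>auto simp: T_def\<close>)
  qed
  have "first_axis \<subseteq> T \<and> l \<subseteq> T"
    using W[unfolded whitney_regular_at_0_def, rule_format, OF tn_nz h2 h3[rule_format] h4 h5 h6 h7 h8] tn_nz by blast
  hence "g \<in> T" by (auto simp: l_def vec.span_base)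
  then obtain \<alpha> \<beta> where "g = \<alpha> *s e1 + \<beta> *s f" by (auto simp: span2 T_def)
  hence e: "p = \<beta> * (2 * p)" "q = \<beta> * (3 * q)" by (simp_all add: g_def e1_def f_def vec4_eq_iff)
  have "q * (\<beta> * 3 - 1) = 0" using e(2) by (simp add: algebra_simps)
  hence b3: "\<beta> * 3 = 1" using q by simp
  have "p * (\<beta> * 2 - 1) = 0" using e(1) by (simp add: algebra_simps)
  hence b2: "\<beta> * 2 = 1" using p by simp
  have "\<beta> = \<beta> * 3 - \<beta> * 2" by simp
  hence "\<beta> = 0" using b2 b3 by simp
  thus False using b3 by simp
qed

theorem mainTheorem11:
  shows "whitney_regular_at_0 (\<lambda>a t. vec4 a (t ^ 4) (a * t ^ 6) (t ^ 7))
       \<and> \<not> whitney_regular_at_0 (\<lambda>a t. vec4 a (t ^ 4) (a * t ^ 2) (t ^ 3))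
       \<and> \<not> whitney_regular_at_0 (\<lambda>a t. vec4 a (t ^ 4) (3 / 2 * a * t ^ 2) (7 / 4 * t ^ 3))"
proof (intro conjI)
  show "whitney_regular_at_0 (\<lambda>a t. vec4 a (t ^ 4) (a * t ^ 6) (t ^ 7))" by (rule part1)
  show "\<not> whitney_regular_at_0 (\<lambda>a t. vec4 a (t ^ 4) (a * t ^ 2) (t ^ 3))"
    using part_neg[of 1 1] by simp
  show "\<not> whitney_regular_at_0 (\<lambda>a t. vec4 a (t ^ 4) (3 / 2 * a * t ^ 2) (7 / 4 * t ^ 3))"
    by (rule part_neg) simp_all
qed

end
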